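(* Every binary Belov code (as defined in the context) is not self-orthogonal.
   Context: Let $S_k$ be the $k\times(2^k-1)$ binary matrix whose columns are all nonzero vectors of $\mathbb{F}_2^k$, and for an integer $s\ge1$ let $sS_k$ be the $k\times s(2^k-1)$ matrix consisting of $s$ copies of $S_k$ placed side by side. For a subspace $V$ of $\mathbb{F}_2^k$ write $V^*=V\setminus\{0\}$. A binary Belov code is defined as follows. Let $s\ge 1$, $t\ge 0$ and integers $u_1>u_2>\cdots>u_t>u\ge 3$ with $k>u_1$ (and $k\ge u+1$ if $t=0$). Let $V_1,\dots,V_t$ be subspaces of $\mathbb{F}_2^k$ with $\dim V_i=u_i$, let $W$ be a subspace of dimension $u+1$, and let $T\subseteq W^*$ be a set of $u+2$ vectors which spans a space of dimension $u+1$ and whose sum is $0$. Let $R$ be either empty or a single nonzero vector of $\mathbb{F}_2^k$. Let $G'$ be the matrix whose columns are the vectors of $V_1^*,\dots,V_t^*$, of $W^*\setminus T$, and of $R$ (listed with multiplicity), and suppose that every nonzero vector of $\mathbb{F}_2^k$ occurs at most $s$ times among the columns of $G'$, so that $G'$ can be regarded as a submatrix of $sS_k$. Let $G$ be the matrix obtained from $sS_k$ by deleting the columns of $G'$ (with multiplicity), and assume $G$ has rank $k$. The binary code generated by $G$ is called a Belov code. A binary code is self-orthogonal if $C\subseteq C^\perp$. *)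

theory Defs
  imports "HOL-Analysis.Analysis" "HOL-Library.Z2" "HOL-Library.Multiset"
begin

text \<open>Vectors of F_2^k are elements of type bit ^ 'k (k = CARD('k)).
  A generator matrix with k rows is given as the list of its columns.\<close>

definition dotF2 :: "bit ^ 'k \<Rightarrow> bit ^ 'k \<Rightarrow> bit" where
  "dotF2 x v = (\<Sum>i\<in>UNIV. x $ i * v $ i)"

definition gen_code :: "(bit ^ 'k) list \<Rightarrow> bit list set" where
  "gen_code G = {map (\<lambda>v. dotF2 x v) G | x. True}"

definition dual_code :: "nat \<Rightarrow> bit list set \<Rightarrow> bit list set" where
  "dual_code n C = {w. length w = n \<and> (\<forall>c\<in>C. (\<Sum>i<n. w ! i * c ! i) = 0)}"

definition self_orthogonal :: "nat \<Rightarrow> bit list set \<Rightarrow> bool" where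
  "self_orthogonal n C \<longleftrightarrow> C \<subseteq> dual_code n C"

text \<open>Columns of s S_k, as a multiset: every nonzero vector s times.\<close>
definition sS :: "nat \<Rightarrow> (bit ^ 'k) multiset" where
  "sS s = repeat_mset s (mset_set (UNIV - {0}))"

end

theory Submission
  imports Defs
begin

declare mult_bit_eq_and[simp del] add_bit_eq_xor[simp del]

lemma UNIV_bit: "(UNIV :: bit set) = {0, 1}"
  by (auto intro: bit.exhaust)

instance bit :: finite
  by standard (simp add: UNIV_bit)

lemma bit_add_self[simp]: "(a::bit) + a = 0" by (cases a) (simp_all add: add_bit_eq_xor)

lemma vec_add_self[simp]: "(v::bit^'k) + v = 0" by (simp add: vec_eq_iff)

lemma dotF2_add: "dotF2 x (a + b) = dotF2 x a + dotF2 x b"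
  unfolding dotF2_def by (simp add: distrib_left sum.distrib)

lemma dotF2_zero[simp]: "dotF2 x 0 = 0"
  unfolding dotF2_def by simp

lemma dotF2_sum: "dotF2 x (\<Sum>S) = (\<Sum>s\<in>S. dotF2 x s)"
  unfolding dotF2_def by (simp add: sum_component sum_distrib_left sum.swap[where A=S])

lemma dotF2_axis: "dotF2 (axis i 1) v = v $ i"
  proof -
  have "\<And>j. axis i 1 $ j * v $ j = (if j = i then v $ j else 0)" by (simp add: axis_def)
  then show ?thesis unfolding dotF2_def by simp
qed

lemma sum_shift_zero:
  fixes f :: "bit^'k \<Rightarrow> bit"
  assumes "a \<noteq> 0" "\<forall>g\<in>V. g + a \<in> V \<and> f (g + a) = f g"
  shows "sum f V = 0"
proof -
  obtain i where i: "a $ i = 1" using assms(1) by (metis bit_not_zero_iff vec_eq_iff zero_index)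
  define V0 where "V0 = {g\<in>V. g $ i = 0}"
  define V1 where "V1 = {g\<in>V. g $ i = 1}"
  have V: "V = V0 \<union> V1" "V0 \<inter> V1 = {}" unfolding V0_def V1_def by auto
  have "sum f V = sum f V0 + sum f V1" using V by (simp add: sum.union_disjoint)
  moreover have "sum f V1 = sum f V0"
  proof (rule sum.reindex_bij_witness[where i="\<lambda>g. g + a" and j="\<lambda>g. g + a"])
    fix g assume "g \<in> V1" then show "g + a + a = g" by (simp add: add.assoc)
  next
    fix g assume "g \<in> V1" then show "g + a \<in> V0" using assms(2) i unfolding V0_def V1_def by auto
  next
    fix g assume "g \<in> V0" then show "g + a + a = g" by (simp add: add.assoc)
  next
    fix g assume "g \<in> V0" then show "g + a \<in> V1" using assms(2) i unfolding V0_def V1_def by auto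
  next
    fix g assume "g \<in> V1" then show "f (g + a) = f g" using assms(2) unfolding V1_def by auto
  qed
  ultimately show ?thesis by simp
qed

lemma bit6: "(p1=0\<and>q1=0) \<or> (p2=0\<and>q2=0) \<or> (p3=0 \<and> q3=0) \<or> (p1+p2=0 \<and> q1+q2=0) \<or> (p1+p3=0\<and>q1+q3=0) \<or> (p2+p3=0 \<and> q2+q3=0) \<or> (p1+p2+p3=0 \<and> q1+q2+q3=(0::bit))"
  for p1 p2 p3 q1 q2 q3 :: bit
  by (cases p1; cases p2; cases p3; cases q1; cases q2; cases q3) (simp_all add: add_bit_eq_xor)

lemma bit_add_eq0: "(a::bit) + b = 0 \<longleftrightarrow> a = b"
  by (cases a; cases b) (simp_all add: add_bit_eq_xor)

lemma vec_add_eq0: "(a::bit^'k) + b = 0 \<longleftrightarrow> a = b"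
  by (simp add: vec_eq_iff bit_add_eq0)

lemma kernel_vec:
  fixes V :: "(bit^'k) set"
  assumes "vec.subspace V" "vec.dim V \<ge> 3"
  shows "\<exists>a\<in>V. a \<noteq> 0 \<and> dotF2 x a = 0 \<and> dotF2 y a = 0"
proof -
  obtain B where B: "B \<subseteq> V" "vec.independent B" "card B = vec.dim V"
    using vec.basis_exists by metis
  obtain S where S: "S \<subseteq> B" "card S = 3" using assms(2) B(3) obtain_subset_with_card_n by metis
  then obtain b1 b2 b3 where bs: "S = {b1,b2,b3}" "b1 \<noteq> b2" "b2 \<noteq> b3" "b1 \<noteq> b3"
    by (auto simp: card_3_iff)
  have inB: "b1 \<in> B" "b2 \<in> B" "b3 \<in> B" using S bs by auto
  have inV: "b1 \<in> V" "b2 \<in> V" "b3 \<in> V" using inB B(1) by auto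
  have nz: "\<And>b. b \<in> B \<Longrightarrow> b \<noteq> 0" using vec.dependent_zero B(2) by blast
  have ind: "\<And>b. b \<in> B \<Longrightarrow> b \<notin> vec.span (B - {b})" using B(2) vec.dependent_def by blast
  have c7: "b1 + b2 + b3 \<noteq> 0"
  proof
    assume "b1 + b2 + b3 = 0"
    then have "b1 + b2 = b3" by (simp add: vec_add_eq0)
    moreover have "b1 + b2 \<in> vec.span (B - {b3})"
      using inB bs by (intro vec.span_add vec.span_base) auto
    ultimately show False using ind inB by auto
  qed
  let ?P = "\<lambda>a. a \<in> V \<and> a \<noteq> 0 \<and> dotF2 x a = 0 \<and> dotF2 y a = 0"
  have sub: "b1 + b2 \<in> V" "b1 + b3 \<in> V" "b2 + b3 \<in> V" "b1 + b2 + b3 \<in> V"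
    using inV assms(1) vec.subspace_add by blast+
  have nz2: "b1 + b2 \<noteq> 0" "b1 + b3 \<noteq> 0" "b2 + b3 \<noteq> 0" using bs by (simp_all add: vec_add_eq0)
  have "?P b1 \<or> ?P b2 \<or> ?P b3 \<or> ?P (b1+b2) \<or> ?P (b1+b3) \<or> ?P (b2+b3) \<or> ?P (b1+b2+b3)"
    using bit6[of "dotF2 x b1" "dotF2 y b1" "dotF2 x b2" "dotF2 y b2" "dotF2 x b3" "dotF2 y b3"]
      inV sub nz2 c7 nz inB by (simp add: dotF2_add)
  then show ?thesis by blast
qed

lemma subspace_sum_zero:
  fixes V :: "(bit^'k) set"
  assumes "vec.subspace V" "vec.dim V \<ge> 3"
  shows "(\<Sum>g\<in>V. dotF2 x g * dotF2 y g) = 0"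
proof -
  obtain a where a: "a \<in> V" "a \<noteq> 0" "dotF2 x a = 0" "dotF2 y a = 0"
    using kernel_vec[OF assms] by blast
  show ?thesis
    by (rule sum_shift_zero[OF a(2)]) (use a assms(1) vec.subspace_add in \<open>auto simp: dotF2_add\<close>)
qed
lemma functional_exists:
  fixes B :: "(bit^'k) set"
  assumes "vec.independent B"
  shows "\<exists>x. \<forall>c\<in>B. dotF2 x c = h c"
proof -
  obtain g :: "bit^'k \<Rightarrow> bit^'k" where g: "Vector_Spaces.linear (*s) (*s) g" "\<forall>c\<in>B. g c = (\<chi> j. h c)"
    using vec.linear_independent_extend[OF assms, of "\<lambda>c. (\<chi> j. h c)"] by blast
  obtain j :: 'k where True by blast
  define x where "x = (\<chi> i. g (axis i 1) $ j)"
  have "dotF2 x c = g c $ j" for c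
    unfolding dotF2_def x_def linear_componentwise[OF g(1), of c j] by (simp add: mult.commute)
  then have "\<forall>c\<in>B. dotF2 x c = h c" using g(2) by simp
  then show ?thesis by blast
qed
lemma T_odd:
  fixes T :: "(bit^'k) set"
  assumes "card T = u+2" "vec.dim T = u+1" "\<Sum>T = 0" "u \<ge> 1"
  shows "\<exists>x y. (\<Sum>t\<in>T. dotF2 x t * dotF2 y t) = 1"
proof -
  have fin: "finite T" using assms(1) card_ge_0_finite by fastforce
  obtain t0 where t0: "t0 \<in> T" using assms(1) by fastforce
  define T' where "T' = T - {t0}"
  have cT': "card T' = u + 1" using assms(1) t0 fin unfolding T'_def by simp
  have finT': "finite T'" using fin unfolding T'_def by simp
  have "\<Sum>T = t0 + \<Sum>T'" using fin t0 unfolding T'_def by (simp add: sum.remove)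
  then have t0s: "t0 = \<Sum>T'" using assms(3) by (simp add: vec_add_eq0)
  have "t0 \<in> vec.span T'" unfolding t0s by (intro vec.span_sum vec.span_base) auto
  then have "vec.span T = vec.span T'" using t0 unfolding T'_def
    by (metis insert_Diff vec.span_redundant)
  then have "vec.dim T' = u + 1" using assms(2) by (metis vec.dim_span)
  then have indT': "vec.independent T'"
    using vec.card_eq_dim[of T' T'] cT' finT' vec.span_superset by auto
  obtain S where S: "S \<subseteq> T'" "card S = 2" using cT' assms(4) obtain_subset_with_card_n[of 2 T'] by auto
  then obtain t1 t2 where ts: "t1 \<in> T'" "t2 \<in> T'" "t1 \<noteq> t2" by (auto simp: card_2_iff)
  obtain x where x: "\<forall>c\<in>T'. dotF2 x c = (if c = t1 then 1 else 0)"
    using functional_exists[OF indT', of "\<lambda>c. if c = t1 then 1 else 0"] by auto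
  obtain y where y: "\<forall>c\<in>T'. dotF2 y c = (if c = t2 then 1 else 0)"
    using functional_exists[OF indT', of "\<lambda>c. if c = t2 then 1 else 0"] by auto
  have x0: "dotF2 x t0 = 1" unfolding t0s dotF2_sum using x ts finT' by simp
  have y0: "dotF2 y t0 = 1" unfolding t0s dotF2_sum using y ts finT' by simp
  have "(\<Sum>t\<in>T'. dotF2 x t * dotF2 y t) = 0"
    using x y ts by (intro sum.neutral) auto
  moreover have "(\<Sum>t\<in>T. dotF2 x t * dotF2 y t) = dotF2 x t0 * dotF2 y t0 + (\<Sum>t\<in>T'. dotF2 x t * dotF2 y t)"
    using fin t0 unfolding T'_def by (simp add: sum.remove)
  ultimately show ?thesis using x0 y0 by auto
qed

definition SM :: "bit^'k \<Rightarrow> bit^'k \<Rightarrow> (bit^'k) multiset \<Rightarrow> bit" where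
  "SM x y M = sum_mset (image_mset (\<lambda>g. dotF2 x g * dotF2 y g) M)"

lemma SM_add: "SM x y (A + B) = SM x y A + SM x y B"
  unfolding SM_def by simp

lemma SM_sum: "SM x y (\<Sum>i\<in>I. M i) = (\<Sum>i\<in>I. SM x y (M i))"
proof (induction I rule: infinite_finite_induct)
  case (infinite A) then show ?case by (simp add: SM_def)
next
  case empty then show ?case by (simp add: SM_def)
next
  case (insert a A) then show ?case by (simp add: SM_add)
qed

lemma SM_mset_set: "finite A \<Longrightarrow> SM x y (mset_set A) = (\<Sum>g\<in>A. dotF2 x g * dotF2 y g)"
  unfolding SM_def by (simp add: sum_unfold_sum_mset)

lemma SM_repeat: "SM x y M = 0 \<Longrightarrow> SM x y (repeat_mset n M) = 0"
  by (induction n) (simp_all add: SM_add, simp add: SM_def)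

lemma subspace_sum_zero':
  fixes V :: "(bit^'k) set"
  assumes "vec.subspace V" "vec.dim V \<ge> 3"
  shows "(\<Sum>g\<in>V - {0}. dotF2 x g * dotF2 y g) = 0"
proof -
  have "(\<Sum>g\<in>V. dotF2 x g * dotF2 y g) = dotF2 x 0 * dotF2 y 0 + (\<Sum>g\<in>V - {0}. dotF2 x g * dotF2 y g)"
    using assms(1) vec.subspace_0 by (intro sum.remove) auto
  then show ?thesis using subspace_sum_zero[OF assms] by simp
qed

lemma SO_imp:
  assumes "self_orthogonal (length G) (gen_code G)"
  shows "SM x y (mset G) = 0"
proof -
  have cx: "map (dotF2 x) G \<in> gen_code G" and cy: "map (dotF2 y) G \<in> gen_code G"
    unfolding gen_code_def by blast+
  then have "map (dotF2 x) G \<in> dual_code (length G) (gen_code G)"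
    using assms unfolding self_orthogonal_def by blast
  then have "(\<Sum>i<length G. map (dotF2 x) G ! i * map (dotF2 y) G ! i) = 0"
    using cy unfolding dual_code_def by blast
  then have "(\<Sum>i<length G. dotF2 x (G ! i) * dotF2 y (G ! i)) = 0" by simp
  moreover have "SM x y (mset G) = (\<Sum>i<length G. dotF2 x (G ! i) * dotF2 y (G ! i))"
  proof -
    have "SM x y (mset G) = sum_list (map (\<lambda>g. dotF2 x g * dotF2 y g) G)"
      unfolding SM_def by (simp flip: mset_map add: sum_mset_sum_list)
    also have "\<dots> = (\<Sum>i<length G. dotF2 x (G ! i) * dotF2 y (G ! i))"
      by (simp add: sum_list_sum_nth atLeast0LessThan)
    finally show ?thesis .
  qed
  ultimately show ?thesis by simp
qed

lemma us_gt:
  assumes "\<forall>i. Suc i < t \<longrightarrow> us (Suc i) < us i" "t > 0 \<longrightarrow> us (t - 1) > (u::nat)"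
  shows "i < t \<Longrightarrow> u < us i"
proof -
  have "\<forall>d. d < t \<longrightarrow> u < us (t - 1 - d)"
  proof
    fix d show "d < t \<longrightarrow> u < us (t - 1 - d)"
    proof (induction d)
      case 0 then show ?case using assms(2) by simp
    next
      case (Suc d)
      show ?case
      proof
        assume d: "Suc d < t"
        have "us (Suc (t - 1 - Suc d)) < us (t - 1 - Suc d)" using assms(1) d by auto
        moreover have "Suc (t - 1 - Suc d) = t - 1 - d" using d by simp
        ultimately show "u < us (t - 1 - Suc d)" using Suc d by auto
      qed
    qed
  qed
  moreover assume "i < t"
  moreover have "t - 1 - i < t" using \<open>i < t\<close> by simp
  ultimately have "u < us (t - 1 - (t - 1 - i))" by blast
  moreover have "t - 1 - (t - 1 - i) = i" using \<open>i < t\<close> by simp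
  ultimately show ?thesis by simp
qed

lemma bit_mult_self: "(a::bit) * a = a" by (cases a) simp_all

theorem theorem4p2:
  fixes G :: "(bit ^ 'k) list"
    and s t u :: nat and us :: "nat \<Rightarrow> nat"
    and V :: "nat \<Rightarrow> (bit ^ 'k) set" and W T R :: "(bit ^ 'k) set"
  assumes s_pos: "s \<ge> 1"
    and us_decr: "\<forall>i. Suc i < t \<longrightarrow> us (Suc i) < us i"
    and us_last: "t > 0 \<longrightarrow> us (t - 1) > u"
    and u_ge: "u \<ge> 3"
    and k_gt: "t > 0 \<longrightarrow> CARD('k) > us 0"
    and k_ge: "t = 0 \<longrightarrow> CARD('k) \<ge> u + 1"
    and V_sub: "\<forall>i<t. vec.subspace (V i) \<and> vec.dim (V i) = us i"
    and W_sub: "vec.subspace W" and W_dim: "vec.dim W = u + 1"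
    and T_sub: "T \<subseteq> W - {0}" and T_card: "card T = u + 2"
    and T_dim: "vec.dim T = u + 1" and T_sum: "\<Sum>T = 0"
    and R_def: "R = {} \<or> (\<exists>r. r \<noteq> 0 \<and> R = {r})"
    and G'_le: "\<forall>v. v \<noteq> 0 \<longrightarrow>
        count ((\<Sum>i<t. mset_set (V i - {0})) + mset_set (W - {0} - T) + mset_set R) v \<le> s"
    and G_def: "mset G = sS s -
        ((\<Sum>i<t. mset_set (V i - {0})) + mset_set (W - {0} - T) + mset_set R)"
    and G_rank: "vec.dim (set G) = CARD('k)"
  shows "\<not> self_orthogonal (length G) (gen_code G)"
proof
  assume SO: "self_orthogonal (length G) (gen_code G)"
  define G' where "G' = (\<Sum>i<t. mset_set (V i - {0})) + mset_set (W - {0} - T) + mset_set R"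
  have R0: "0 \<notin> R" using R_def by auto
  have c0: "count G' 0 = 0" unfolding G'_def using R0 by (simp add: count_sum)
  have cS: "count (sS s) v = (if v = 0 then 0 else s)" for v :: "bit^'k"
    unfolding sS_def by simp
  have "G' \<subseteq># sS s"
    unfolding subseteq_mset_def
  proof
    fix v :: "bit^'k"
    show "count G' v \<le> count (sS s) v"
      using c0 G'_le cS unfolding G'_def by (cases "v = 0") auto
  qed
  then have GG': "mset G + G' = sS s" using G_def unfolding G'_def[symmetric]
    by (simp add: subset_mset.diff_add)
  have dimU: "vec.dim (UNIV :: (bit^'k) set) \<ge> 3"
    using vec.dim_subset_UNIV[of W] W_dim u_ge unfolding vec.dim_UNIV vec.dimension_def by linarith
  have key: "SM x y (mset G) = (\<Sum>g\<in>T. dotF2 x g * dotF2 y g) + SM x y (mset_set R)" for x y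
  proof -
    have "SM x y (sS s) = 0"
      unfolding sS_def
      by (rule SM_repeat) (simp add: SM_mset_set subspace_sum_zero'[OF vec.subspace_UNIV dimU])
    have "SM x y (mset_set (V i - {0})) = 0" if "i < t" for i
      using V_sub that us_gt[OF us_decr us_last that] u_ge
      by (simp add: SM_mset_set subspace_sum_zero')
    then have sV: "SM x y (\<Sum>i<t. mset_set (V i - {0})) = 0" by (simp add: SM_sum)
    have finW: "finite (W - {0})" by simp
    have "(\<Sum>g\<in>W - {0}. dotF2 x g * dotF2 y g) = (\<Sum>g\<in>W - {0} - T. dotF2 x g * dotF2 y g) + (\<Sum>g\<in>T. dotF2 x g * dotF2 y g)"
      using sum.subset_diff[OF T_sub finW] by simp
    then have "(\<Sum>g\<in>W - {0} - T. dotF2 x g * dotF2 y g) = (\<Sum>g\<in>T. dotF2 x g * dotF2 y g)"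
      using subspace_sum_zero'[OF W_sub, of x y] W_dim u_ge by (simp add: bit_add_eq0)
    then have sW: "SM x y (mset_set (W - {0} - T)) = (\<Sum>g\<in>T. dotF2 x g * dotF2 y g)"
      by (simp add: SM_mset_set)
    have "SM x y (mset G) + SM x y G' = 0" using GG' \<open>SM x y (sS s) = 0\<close> by (metis SM_add)
    then have "SM x y (mset G) = SM x y G'" by (simp add: bit_add_eq0)
    also have "\<dots> = (\<Sum>g\<in>T. dotF2 x g * dotF2 y g) + SM x y (mset_set R)"
      unfolding G'_def SM_add sV sW by simp
    finally show ?thesis .
  qed
  from R_def show False
  proof
    assume "R = {}"
    then obtain x y where "(\<Sum>g\<in>T. dotF2 x g * dotF2 y g) = 1"
      using T_odd[OF T_card T_dim T_sum] u_ge by auto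
    then have "SM x y (mset G) = 1" using key \<open>R = {}\<close> by (simp add: SM_def)
    then show False using SO_imp[OF SO] by simp
  next
    assume "\<exists>r. r \<noteq> 0 \<and> R = {r}"
    then obtain r where r: "r \<noteq> 0" "R = {r}" by blast
    obtain i where i: "r $ i = 1" using r(1) by (metis bit_not_zero_iff vec_eq_iff zero_index)
    have "(\<Sum>g\<in>T. dotF2 (axis i 1) g * dotF2 (axis i 1) g) = (\<Sum>g\<in>T. g $ i)"
      by (simp add: dotF2_axis bit_mult_self)
    also have "\<dots> = (\<Sum>T) $ i" by (simp add: sum_component)
    also have "\<dots> = 0" using T_sum by simp
    finally have sT: "(\<Sum>g\<in>T. dotF2 (axis i 1) g * dotF2 (axis i 1) g) = 0" .
    have sR: "SM (axis i 1) (axis i 1) (mset_set R) = 1"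
      using r(2) i by (simp add: SM_def dotF2_axis)
    have "SM (axis i 1) (axis i 1) (mset G) = 1"
      unfolding key sT sR by simp
    then show False using SO_imp[OF SO] by simp
  qed
qed
end
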